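(* ($\mathbf{RCA_0}$) For any coded prae-dilator $T$, the linear order $\vartheta(T)$ is a Bachmann–Howard fixed point of $T$, i.e. there exists a Bachmann–Howard collapse $\vartheta:D^T_{\vartheta(T)}\to\vartheta(T)$.
   Context: Conventions. Each natural number $n$ is identified with the linear order $\{0,\dots,n-1\}$; the category of natural numbers has these as objects and strictly increasing maps as morphisms. For a finite linear order $a$ write $|a|$ for its cardinality and $\operatorname{en}_a:|a|\to a$ for the unique order isomorphism; for an order embedding $f:a\to b$ of finite linear orders, $|f|:|a|\to|b|$ is the unique strictly increasing map with $\operatorname{en}_b\circ|f|=f\circ\operatorname{en}_a$. For $c\subseteq d$, $\iota_c^d$ is the inclusion. $[X]^{<\omega}$ is the set of finite subsets of $X$, $[f]^{<\omega}(a)=\{f(s)\mid s\in a\}$. For a linear order $X$, $a\in[X]^{<\omega}$, $x\in X$: $a<^{\mathrm{fin}}_X x$ means $s<_Xx$ for all $s\in a$. A coded prae-dilator (represented by sets of natural numbers coding the orders $T_n$, the maps $T_f$ and the supports) consists of a functor $T$ from the category of natural numbers to linear orders with fields in $\mathbb N$, and a natural transformation $\operatorname{supp}^T:T\Rightarrow[\cdot]^{<\omega}$ ($\operatorname{supp}^T_m\circ T_f=[f]^{<\omega}\circ\operatorname{supp}^T_n$ for $f:n\to m$) such that every $\sigma\in T_n$ lies in the range of $T_{\iota\circ\operatorname{en}}$, with $\operatorname{en}=\operatorname{en}_{\operatorname{supp}^T_n(\sigma)}$ and $\iota$ the inclusion of $\operatorname{supp}^T_n(\sigma)$ into $n$.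 For a linear order $(X,<_X)$ with $X\subseteq\mathbb N$: $D^T_X=\{\langle a,\sigma\rangle\mid a\in[X]^{<\omega},\ \sigma\in T_{|a|},\ \operatorname{supp}^T_{|a|}(\sigma)=|a|\}$ ordered by $\langle a,\sigma\rangle<_{D^T_X}\langle b,\tau\rangle$ iff $T_{|\iota_a^{a\cup b}|}(\sigma)<_{T_{|a\cup b|}}T_{|\iota_b^{a\cup b}|}(\tau)$, with $\operatorname{supp}^{D^T}_X(\langle a,\sigma\rangle)=a$. A Bachmann–Howard collapse is a function $\vartheta:D^T_X\to X$ such that for all $\rho,\pi\in D^T_X$: (a) if $\rho<_{D^T_X}\pi$ and $\operatorname{supp}^{D^T}_X(\rho)<^{\mathrm{fin}}_X\vartheta(\pi)$ then $\vartheta(\rho)<_X\vartheta(\pi)$; (b) $\operatorname{supp}^{D^T}_X(\rho)<^{\mathrm{fin}}_X\vartheta(\rho)$. $X$ is then called a Bachmann–Howard fixed point of $T$. The order $\vartheta(T)$ (terms coded by natural numbers): defined by simultaneous recursion; whenever $s_0<_{\vartheta(T)}\dots<_{\vartheta(T)}s_{n-1}$ are in $\vartheta(T)$ ($n\geq0$) and $\sigma\in T_n$ with $\operatorname{supp}^T_n(\sigma)=n$, the term $\vartheta_\sigma^{s_0,\dots,s_{n-1}}$ is in $\vartheta(T)$. For $s=\vartheta_\sigma^{s_0,\dots,s_{n-1}}$, $t=\vartheta_\tau^{t_0,\dots,t_{m-1}}$: $s<_{\vartheta(T)}t$ iff (i') there are strictly increasing $f:n\to k$, $g:m\to k$, $k=|\{s_0,\dots,s_{n-1},t_0,\dots,t_{m-1}\}|$,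 with $f(i)<g(j)\Leftrightarrow s_i<_{\vartheta(T)}t_j$ and $g(j)<f(i)\Leftrightarrow t_j<_{\vartheta(T)}s_i$, such that $T_f(\sigma)<_{T_k}T_g(\tau)$, and moreover $n=0$ or $s_{n-1}<_{\vartheta(T)}t$; or (ii') $m>0$ and $s\leq_{\vartheta(T)}t_{m-1}$. *)

theory Defs
  imports Main
begin

definition rank :: "('a \<Rightarrow> 'a \<Rightarrow> bool) \<Rightarrow> 'a set \<Rightarrow> 'a \<Rightarrow> nat" where
  "rank lessX a x = card {y \<in> a. lessX y x}"

definition en :: "('a \<Rightarrow> 'a \<Rightarrow> bool) \<Rightarrow> 'a set \<Rightarrow> nat \<Rightarrow> 'a" where
  "en lessX a i = (THE x. x \<in> a \<and> rank lessX a x = i)"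

definition collapse_incl :: "('a \<Rightarrow> 'a \<Rightarrow> bool) \<Rightarrow> 'a set \<Rightarrow> 'a set \<Rightarrow> nat \<Rightarrow> nat" where
  "collapse_incl lessX a b = (\<lambda>i. rank lessX b (en lessX a i))"

definition strict_linear_on :: "'a set \<Rightarrow> ('a \<Rightarrow> 'a \<Rightarrow> bool) \<Rightarrow> bool" where
  "strict_linear_on A r \<longleftrightarrow>
     (\<forall>x\<in>A. \<not> r x x) \<and>
     (\<forall>x\<in>A. \<forall>y\<in>A. \<forall>z\<in>A. r x y \<longrightarrow> r y z \<longrightarrow> r x z) \<and>
     (\<forall>x\<in>A. \<forall>y\<in>A. x \<noteq> y \<longrightarrow> r x y \<or> r y x)"

text \<open>Morphisms f : n -> m of the category of natural numbers (strictly increasing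
  maps from the set of numbers below n to the set of numbers below m), represented by
  functions nat => nat whose values outside the domain are irrelevant.\<close>
definition nat_mor :: "nat \<Rightarrow> nat \<Rightarrow> (nat \<Rightarrow> nat) \<Rightarrow> bool" where
  "nat_mor n m f \<longleftrightarrow> strict_mono_on {..<n} f \<and> f ` {..<n} \<subseteq> {..<m}"

record praedil =
  Tset  :: "nat \<Rightarrow> nat set"
  Tless :: "nat \<Rightarrow> nat \<Rightarrow> nat \<Rightarrow> bool"
  Tmap  :: "nat \<Rightarrow> nat \<Rightarrow> (nat \<Rightarrow> nat) \<Rightarrow> nat \<Rightarrow> nat"
  Tsupp :: "nat \<Rightarrow> nat \<Rightarrow> nat set"

definition prae_dilator :: "praedil \<Rightarrow> bool" where
  "prae_dilator T \<longleftrightarrow>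
     \<comment> \<open>each T_n is a linear order\<close>
     (\<forall>n. strict_linear_on (Tset T n) (Tless T n)) \<and>
     \<comment> \<open>T_f is a morphism of linear orders (order embedding T_n -> T_m)\<close>
     (\<forall>n m f. nat_mor n m f \<longrightarrow>
        (\<forall>\<sigma>\<in>Tset T n. Tmap T n m f \<sigma> \<in> Tset T m) \<and>
        (\<forall>\<sigma>\<in>Tset T n. \<forall>\<tau>\<in>Tset T n. Tless T n \<sigma> \<tau> \<longrightarrow> Tless T m (Tmap T n m f \<sigma>) (Tmap T n m f \<tau>))) \<and>
     \<comment> \<open>T_f depends only on the morphism f, i.e. on f restricted to n\<close>
     (\<forall>n m f g. nat_mor n m f \<longrightarrow> (\<forall>i<n. f i = g i) \<longrightarrow>
        (\<forall>\<sigma>\<in>Tset T n. Tmap T n m f \<sigma> = Tmap T n m g \<sigma>)) \<and>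
     \<comment> \<open>functoriality\<close>
     (\<forall>n. \<forall>\<sigma>\<in>Tset T n. Tmap T n n id \<sigma> = \<sigma>) \<and>
     (\<forall>n m k f g. nat_mor n m f \<longrightarrow> nat_mor m k g \<longrightarrow>
        (\<forall>\<sigma>\<in>Tset T n. Tmap T n k (g \<circ> f) \<sigma> = Tmap T m k g (Tmap T n m f \<sigma>))) \<and>
     \<comment> \<open>supp is a natural transformation T => finite subsets\<close>
     (\<forall>n. \<forall>\<sigma>\<in>Tset T n. Tsupp T n \<sigma> \<subseteq> {..<n}) \<and>
     (\<forall>n m f. nat_mor n m f \<longrightarrow>
        (\<forall>\<sigma>\<in>Tset T n. Tsupp T m (Tmap T n m f \<sigma>) = f ` Tsupp T n \<sigma>)) \<and>
     \<comment> \<open>support condition: sigma lies in the range of T_(iota o en)\<close>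
     (\<forall>n. \<forall>\<sigma>\<in>Tset T n.
        \<exists>\<tau>\<in>Tset T (card (Tsupp T n \<sigma>)).
          \<sigma> = Tmap T (card (Tsupp T n \<sigma>)) n (en (<) (Tsupp T n \<sigma>)) \<tau>)"

text \<open>Elements <a, sigma> of D^T_X are represented as pairs (a, sigma).\<close>
definition DT :: "praedil \<Rightarrow> 'a set \<Rightarrow> ('a \<Rightarrow> 'a \<Rightarrow> bool) \<Rightarrow> ('a set \<times> nat) set" where
  "DT T X lessX = {(a, \<sigma>). finite a \<and> a \<subseteq> X \<and> \<sigma> \<in> Tset T (card a) \<and>
                            Tsupp T (card a) \<sigma> = {..<card a}}"

definition DT_less :: "praedil \<Rightarrow> ('a \<Rightarrow> 'a \<Rightarrow> bool) \<Rightarrow> ('a set \<times> nat) \<Rightarrow> ('a set \<times> nat) \<Rightarrow> bool" where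
  "DT_less T lessX p q = (case p of (a, \<sigma>) \<Rightarrow> case q of (b, \<tau>) \<Rightarrow>
     Tless T (card (a \<union> b))
       (Tmap T (card a) (card (a \<union> b)) (collapse_incl lessX a (a \<union> b)) \<sigma>)
       (Tmap T (card b) (card (a \<union> b)) (collapse_incl lessX b (a \<union> b)) \<tau>))"

definition DT_supp :: "('a set \<times> nat) \<Rightarrow> 'a set" where
  "DT_supp p = fst p"

definition fin_less :: "('a \<Rightarrow> 'a \<Rightarrow> bool) \<Rightarrow> 'a set \<Rightarrow> 'a \<Rightarrow> bool" where
  "fin_less lessX a x \<longleftrightarrow> (\<forall>s\<in>a. lessX s x)"

definition bh_collapse ::
  "praedil \<Rightarrow> 'a set \<Rightarrow> ('a \<Rightarrow> 'a \<Rightarrow> bool) \<Rightarrow> ('a set \<times> nat \<Rightarrow> 'a) \<Rightarrow> bool" where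
  "bh_collapse T X lessX \<theta> \<longleftrightarrow>
     (\<forall>\<rho>\<in>DT T X lessX. \<theta> \<rho> \<in> X) \<and>
     (\<forall>\<rho>\<in>DT T X lessX. \<forall>\<pi>\<in>DT T X lessX.
        DT_less T lessX \<rho> \<pi> \<longrightarrow> fin_less lessX (DT_supp \<rho>) (\<theta> \<pi>) \<longrightarrow> lessX (\<theta> \<rho>) (\<theta> \<pi>)) \<and>
     (\<forall>\<rho>\<in>DT T X lessX. fin_less lessX (DT_supp \<rho>) (\<theta> \<rho>))"

definition bh_fixed_point :: "praedil \<Rightarrow> 'a set \<Rightarrow> ('a \<Rightarrow> 'a \<Rightarrow> bool) \<Rightarrow> bool" where
  "bh_fixed_point T X lessX \<longleftrightarrow>
     strict_linear_on X lessX \<and> (\<exists>\<theta>. bh_collapse T X lessX \<theta>)"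

text \<open>Th sigma [s_0, ..., s_(n-1)] stands for the term vartheta_sigma^(s_0,...,s_(n-1)).\<close>
datatype thterm = Th nat "thterm list"

lemma size_mem_le: "x \<in> set xs \<Longrightarrow> size x \<le> size_list size (xs :: thterm list)"
  by (rule size_list_estimation') auto

function thless :: "praedil \<Rightarrow> thterm \<Rightarrow> thterm \<Rightarrow> bool" where
  "thless T (Th \<sigma> ss) (Th \<tau> ts) =
    (((\<exists>f g. nat_mor (length ss) (card (set ss \<union> set ts)) f \<and>
             nat_mor (length ts) (card (set ss \<union> set ts)) g \<and>
             (\<forall>i<length ss. \<forall>j<length ts.
                (f i < g j \<longleftrightarrow> thless T (ss ! i) (ts ! j)) \<and>
                (g j < f i \<longleftrightarrow> thless T (ts ! j) (ss ! i))) \<and>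
             Tless T (card (set ss \<union> set ts))
               (Tmap T (length ss) (card (set ss \<union> set ts)) f \<sigma>)
               (Tmap T (length ts) (card (set ss \<union> set ts)) g \<tau>)) \<and>
      (ss \<noteq> [] \<longrightarrow> thless T (last ss) (Th \<tau> ts)))
     \<or> (if ts = [] then False
        else (thless T (Th \<sigma> ss) (last ts) \<or> Th \<sigma> ss = last ts)))"
  by pat_completeness auto
termination
  apply (relation "measure (\<lambda>(T, s, t). size s + size t)")
  apply simp_all
  by (auto dest!: size_mem_le[OF nth_mem] size_mem_le[OF last_in_set])

inductive_set thT :: "praedil \<Rightarrow> thterm set" for T :: praedil where
  thT_intro: "\<lbrakk>\<forall>s\<in>set ss. s \<in> thT T; successively (thless T) ss;
     \<sigma> \<in> Tset T (length ss); Tsupp T (length ss) \<sigma> = {..<length ss}\<rbrakk>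
   \<Longrightarrow> Th \<sigma> ss \<in> thT T"

end

theory Submission
  imports Defs
begin

lemma slo_irrefl: "strict_linear_on X r \<Longrightarrow> x \<in> X \<Longrightarrow> \<not> r x x"
  unfolding strict_linear_on_def by blast
lemma slo_trans: "strict_linear_on X r \<Longrightarrow> x \<in> X \<Longrightarrow> y \<in> X \<Longrightarrow> z \<in> X \<Longrightarrow> r x y \<Longrightarrow> r y z \<Longrightarrow> r x z"
  unfolding strict_linear_on_def by blast
lemma slo_total: "strict_linear_on X r \<Longrightarrow> x \<in> X \<Longrightarrow> y \<in> X \<Longrightarrow> x \<noteq> y \<Longrightarrow> r x y \<or> r y x"
  unfolding strict_linear_on_def by blast
lemma slo_asym: "strict_linear_on X r \<Longrightarrow> x \<in> X \<Longrightarrow> y \<in> X \<Longrightarrow> r x y \<Longrightarrow> \<not> r y x"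
  unfolding strict_linear_on_def by blast
lemma slo_subset: "strict_linear_on X r \<Longrightarrow> Y \<subseteq> X \<Longrightarrow> strict_linear_on Y r"
  unfolding strict_linear_on_def by blast

section \<open>rank and en\<close>

lemma rank_less_card:
  assumes "strict_linear_on X r" "a \<subseteq> X" "finite a" "x \<in> a"
  shows "rank r a x < card a"
proof -
  have "{y \<in> a. r y x} \<subset> a" using assms slo_irrefl[of X r x] by blast
  then show ?thesis unfolding rank_def using assms(3) by (simp add: psubset_card_mono)
qed

lemma rank_mono:
  assumes "strict_linear_on X r" "a \<subseteq> X" "finite a" "x \<in> a" "y \<in> a" "r x y"
  shows "rank r a x < rank r a y"
proof -
  have "{z \<in> a. r z x} \<subset> {z \<in> a. r z y}"
    using assms slo_irrefl[of X r x] slo_trans[of X r] by blast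
  then show ?thesis unfolding rank_def using assms(3) by (simp add: psubset_card_mono)
qed

lemma rank_less_iff:
  assumes "strict_linear_on X r" "a \<subseteq> X" "finite a" "x \<in> a" "y \<in> a"
  shows "rank r a x < rank r a y \<longleftrightarrow> r x y"
proof
  assume "rank r a x < rank r a y"
  then show "r x y" using rank_mono[OF assms(1-3) assms(5,4)] slo_total[of X r x y] assms
    by (metis in_mono less_asym' less_irrefl)
qed (use rank_mono[OF assms] in auto)

lemma rank_inj:
  assumes "strict_linear_on X r" "a \<subseteq> X" "finite a"
  shows "inj_on (rank r a) a"
proof (rule inj_onI)
  fix x y assume "x \<in> a" "y \<in> a" "rank r a x = rank r a y"
  then show "x = y" using rank_mono[OF assms, of x y] rank_mono[OF assms, of y x]
      slo_total[of X r x y] assms by auto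
qed

lemma rank_image:
  assumes "strict_linear_on X r" "a \<subseteq> X" "finite a"
  shows "rank r a ` a = {..<card a}"
proof (rule card_subset_eq)
  show "rank r a ` a \<subseteq> {..<card a}" using rank_less_card[OF assms] by auto
  show "card (rank r a ` a) = card {..<card a}"
    using card_image[OF rank_inj[OF assms]] by simp
qed simp

lemma en_props:
  assumes "strict_linear_on X r" "a \<subseteq> X" "finite a" "i < card a"
  shows "en r a i \<in> a \<and> rank r a (en r a i) = i"
proof -
  obtain x where x: "x \<in> a" "rank r a x = i" using rank_image[OF assms(1-3)] assms(4)
    by (metis imageE lessThan_iff)
  have "\<exists>!x. x \<in> a \<and> rank r a x = i"
    using x rank_inj[OF assms(1-3)] by (auto dest: inj_onD)
  then show ?thesis unfolding en_def by (rule theI')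
qed

lemma en_in: "strict_linear_on X r \<Longrightarrow> a \<subseteq> X \<Longrightarrow> finite a \<Longrightarrow> i < card a \<Longrightarrow> en r a i \<in> a"
  using en_props by blast
lemma rank_en: "strict_linear_on X r \<Longrightarrow> a \<subseteq> X \<Longrightarrow> finite a \<Longrightarrow> i < card a \<Longrightarrow> rank r a (en r a i) = i"
  using en_props by blast

lemma en_rank:
  assumes "strict_linear_on X r" "a \<subseteq> X" "finite a" "x \<in> a"
  shows "en r a (rank r a x) = x"
proof -
  have "rank r a x < card a" using rank_less_card[OF assms] .
  then have "en r a (rank r a x) \<in> a" "rank r a (en r a (rank r a x)) = rank r a x"
    using en_props[OF assms(1-3)] by blast+
  then show ?thesis using rank_inj[OF assms(1-3)] assms(4) by (auto dest: inj_onD)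
qed

lemma en_less_iff:
  assumes "strict_linear_on X r" "a \<subseteq> X" "finite a" "i < card a" "j < card a"
  shows "r (en r a i) (en r a j) \<longleftrightarrow> i < j"
  using rank_less_iff[OF assms(1-3) en_in[OF assms(1-4)] en_in[OF assms(1-3) assms(5)]]
    rank_en[OF assms(1-4)] rank_en[OF assms(1-3) assms(5)] by simp

lemma en_image:
  assumes "strict_linear_on X r" "a \<subseteq> X" "finite a"
  shows "en r a ` {..<card a} = a"
proof
  show "en r a ` {..<card a} \<subseteq> a" using en_in[OF assms] by auto
  show "a \<subseteq> en r a ` {..<card a}"
  proof
    fix x assume "x \<in> a"
    then show "x \<in> en r a ` {..<card a}"
      using en_rank[OF assms] rank_less_card[OF assms] by (metis image_eqI lessThan_iff)
  qed
qed

lemma sorted_distinct: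
  assumes "strict_linear_on X r" "set xs \<subseteq> X" "sorted_wrt r xs"
  shows "distinct xs"
  using assms(2,3)
proof (induction xs)
  case (Cons x xs)
  then show ?case using slo_irrefl[OF assms(1), of x] by auto
qed simp

lemma sorted_card:
  assumes "strict_linear_on X r" "set xs \<subseteq> X" "sorted_wrt r xs"
  shows "card (set xs) = length xs"
  using sorted_distinct[OF assms] distinct_card by blast

lemma sorted_rank:
  assumes "strict_linear_on X r" "set xs \<subseteq> X" "sorted_wrt r xs" "i < length xs"
  shows "rank r (set xs) (xs ! i) = i"
proof -
  have "{y \<in> set xs. r y (xs ! i)} = (\<lambda>j. xs ! j) ` {..<i}"
  proof
    show "{y \<in> set xs. r y (xs ! i)} \<subseteq> (\<lambda>j. xs ! j) ` {..<i}"
    proof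
      fix y assume y: "y \<in> {y \<in> set xs. r y (xs ! i)}"
      then obtain j where j: "j < length xs" "y = xs ! j" by (auto simp: in_set_conv_nth)
      have "j < i"
      proof (rule ccontr)
        assume "\<not> j < i"
        then consider "j = i" | "i < j" by linarith
        then show False
        proof cases
          case 1
          have "xs ! i \<in> X" using assms(2) nth_mem[OF assms(4)] by blast
          moreover have "r (xs ! i) (xs ! i)" using y j 1 by simp
          ultimately show ?thesis using slo_irrefl[OF assms(1)] by blast
        next
          case 2
          then have "r (xs ! i) (xs ! j)" using assms(3) j(1) by (simp add: sorted_wrt_iff_nth_less)
          moreover have "xs ! i \<in> X" "xs ! j \<in> X" using assms(2) nth_mem[OF assms(4)] nth_mem[OF j(1)] by blast+
          moreover have "r (xs ! j) (xs ! i)" using y j by simp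
          ultimately show ?thesis using slo_asym[OF assms(1)] by blast
        qed
      qed
      then show "y \<in> (\<lambda>j. xs ! j) ` {..<i}" using j by auto
    qed
    show "(\<lambda>j. xs ! j) ` {..<i} \<subseteq> {y \<in> set xs. r y (xs ! i)}"
      using assms(3,4) by (auto simp: sorted_wrt_iff_nth_less)
  qed
  moreover have "inj_on (\<lambda>j. xs ! j) {..<i}"
    using inj_on_nth[OF sorted_distinct[OF assms(1-3)], of "{..<i}"] assms(4) by auto
  ultimately show ?thesis unfolding rank_def by (simp add: card_image)
qed

lemma sorted_en:
  assumes "strict_linear_on X r" "set xs \<subseteq> X" "sorted_wrt r xs" "i < length xs"
  shows "en r (set xs) i = xs ! i"
  using en_rank[OF assms(1,2) finite_set nth_mem[OF assms(4)]] sorted_rank[OF assms] by simp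

lemma sorted_unique:
  assumes "strict_linear_on X r" "set xs \<subseteq> X" "sorted_wrt r xs" "sorted_wrt r ys" "set ys = set xs"
  shows "ys = xs"
proof -
  have sy: "set ys \<subseteq> X" using assms by simp
  have l: "length ys = length xs" using sorted_card[OF assms(1-3)] sorted_card[OF assms(1) sy assms(4)] assms(5) by simp
  show ?thesis
  proof (rule nth_equalityI)
    fix i assume "i < length ys"
    then show "ys ! i = xs ! i" using sorted_en[OF assms(1) sy assms(4)] sorted_en[OF assms(1-3)] l assms(5)
      by metis
  qed (rule l)
qed

definition slist :: "('a \<Rightarrow> 'a \<Rightarrow> bool) \<Rightarrow> 'a set \<Rightarrow> 'a list" where
  "slist r a = map (en r a) [0..<card a]"

lemma slist_props:
  assumes "strict_linear_on X r" "a \<subseteq> X" "finite a"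
  shows "set (slist r a) = a" "sorted_wrt r (slist r a)" "length (slist r a) = card a"
proof -
  show "set (slist r a) = a" unfolding slist_def using en_image[OF assms] by (simp add: atLeast0LessThan)
  show "length (slist r a) = card a" unfolding slist_def by simp
  show "sorted_wrt r (slist r a)" unfolding slist_def sorted_wrt_iff_nth_less
    using en_less_iff[OF assms] by auto
qed

section \<open>collapse of inclusions\<close>

lemma cinc_less:
  assumes "strict_linear_on X r" "b \<subseteq> X" "finite b" "a \<subseteq> b" "i < card a"
  shows "collapse_incl r a b i < card b"
proof -
  have fa: "finite a" "a \<subseteq> X" using finite_subset[OF assms(4,3)] assms(2,4) by auto
  have "en r a i \<in> b" using en_in[OF assms(1) fa(2,1) assms(5)] assms(4) by blast
  then show ?thesis unfolding collapse_incl_def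
    using rank_less_card[OF assms(1-3)] by blast
qed

lemma cinc_nat_mor:
  assumes "strict_linear_on X r" "b \<subseteq> X" "finite b" "a \<subseteq> b"
  shows "nat_mor (card a) (card b) (collapse_incl r a b)"
proof -
  have fa: "finite a" "a \<subseteq> X" using finite_subset[OF assms(4,3)] assms(2,4) by auto
  show ?thesis unfolding nat_mor_def strict_mono_on_def
  proof (intro conjI allI impI subsetI)
    fix i j assume "i \<in> {..<card a} \<and> j \<in> {..<card a} \<and> i < j"
    then have ij: "i < card a" "j < card a" "i < j" by auto
    have "en r a i \<in> b" "en r a j \<in> b" using en_in[OF assms(1) fa(2,1)] ij assms(4) by blast+
    moreover have "r (en r a i) (en r a j)" using en_less_iff[OF assms(1) fa(2,1)] ij by blast
    ultimately show "collapse_incl r a b i < collapse_incl r a b j" unfolding collapse_incl_def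
      using rank_mono[OF assms(1-3)] by blast
  next
    fix x assume "x \<in> collapse_incl r a b ` {..<card a}"
    then show "x \<in> {..<card b}" using cinc_less[OF assms] by auto
  qed
qed

lemma cinc_comp:
  assumes "strict_linear_on X r" "c \<subseteq> X" "finite c" "a \<subseteq> b" "b \<subseteq> c" "i < card a"
  shows "collapse_incl r b c (collapse_incl r a b i) = collapse_incl r a c i"
proof -
  have f: "finite a" "a \<subseteq> X" "finite b" "b \<subseteq> X"
    using finite_subset[OF assms(5,3)] finite_subset[OF assms(4)] assms(2,4,5) by auto
  have "en r a i \<in> b" using en_in[OF assms(1) f(2,1) assms(6)] assms(4) by blast
  then show ?thesis unfolding collapse_incl_def using en_rank[OF assms(1) f(4,3)] by simp
qed

lemma cinc_image:
  assumes "strict_linear_on X r" "a \<subseteq> X" "finite a"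
  shows "collapse_incl r a b ` {..<card a} = rank r b ` a"
  unfolding collapse_incl_def using en_image[OF assms] by (metis image_image)

lemma cinc_sorted:
  assumes "strict_linear_on X r" "set xs \<subseteq> X" "sorted_wrt r xs" "i < length xs"
  shows "collapse_incl r (set xs) b i = rank r b (xs ! i)"
  unfolding collapse_incl_def using sorted_en[OF assms] by simp

lemma PD_lin: "prae_dilator T \<Longrightarrow> strict_linear_on (Tset T n) (Tless T n)"
  using prae_dilator_def[THEN iffD1, THEN conjunct1] by blast
lemma PD_map: "prae_dilator T \<Longrightarrow> nat_mor n m f \<Longrightarrow> \<sigma> \<in> Tset T n \<Longrightarrow> Tmap T n m f \<sigma> \<in> Tset T m"
  using prae_dilator_def[THEN iffD1, THEN conjunct2, THEN conjunct1] by blast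
lemma PD_mono: "prae_dilator T \<Longrightarrow> nat_mor n m f \<Longrightarrow> \<sigma> \<in> Tset T n \<Longrightarrow> \<tau> \<in> Tset T n \<Longrightarrow>
   Tless T n \<sigma> \<tau> \<Longrightarrow> Tless T m (Tmap T n m f \<sigma>) (Tmap T n m f \<tau>)"
  using prae_dilator_def[THEN iffD1, THEN conjunct2, THEN conjunct1] by blast
lemma PD_cong: "prae_dilator T \<Longrightarrow> nat_mor n m f \<Longrightarrow> (\<And>i. i < n \<Longrightarrow> f i = g i) \<Longrightarrow> \<sigma> \<in> Tset T n \<Longrightarrow>
   Tmap T n m f \<sigma> = Tmap T n m g \<sigma>"
  using prae_dilator_def[THEN iffD1, THEN conjunct2, THEN conjunct2, THEN conjunct1] by blast
lemma PD_comp: "prae_dilator T \<Longrightarrow> nat_mor n m f \<Longrightarrow> nat_mor m k g \<Longrightarrow> \<sigma> \<in> Tset T n \<Longrightarrow>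
   Tmap T n k (g \<circ> f) \<sigma> = Tmap T m k g (Tmap T n m f \<sigma>)"
  using prae_dilator_def[THEN iffD1, THEN conjunct2, THEN conjunct2, THEN conjunct2, THEN conjunct2, THEN conjunct1] by blast
lemma PD_supp: "prae_dilator T \<Longrightarrow> nat_mor n m f \<Longrightarrow> \<sigma> \<in> Tset T n \<Longrightarrow>
   Tsupp T m (Tmap T n m f \<sigma>) = f ` Tsupp T n \<sigma>"
  using prae_dilator_def[THEN iffD1, THEN conjunct2, THEN conjunct2, THEN conjunct2, THEN conjunct2, THEN conjunct2, THEN conjunct2, THEN conjunct1] by blast

lemma PD_reflect:
  assumes "prae_dilator T" "nat_mor n m f" "\<sigma> \<in> Tset T n" "\<tau> \<in> Tset T n"
  shows "Tless T m (Tmap T n m f \<sigma>) (Tmap T n m f \<tau>) \<longleftrightarrow> Tless T n \<sigma> \<tau>"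
proof
  assume a: "Tless T m (Tmap T n m f \<sigma>) (Tmap T n m f \<tau>)"
  have lm: "strict_linear_on (Tset T m) (Tless T m)" and ln: "strict_linear_on (Tset T n) (Tless T n)"
    using PD_lin[OF assms(1)] by blast+
  have im: "Tmap T n m f \<sigma> \<in> Tset T m" "Tmap T n m f \<tau> \<in> Tset T m" using PD_map[OF assms(1,2)] assms(3,4) by blast+
  show "Tless T n \<sigma> \<tau>"
  proof (rule ccontr)
    assume "\<not> Tless T n \<sigma> \<tau>"
    then consider "\<sigma> = \<tau>" | "Tless T n \<tau> \<sigma>" using slo_total[OF ln assms(3,4)] by blast
    then show False
    proof cases
      case 1 then show ?thesis using a slo_irrefl[OF lm im(1)] by simp
    next
      case 2 then show ?thesis using a PD_mono[OF assms(1,2,4,3)] slo_asym[OF lm im] by blast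
    qed
  qed
qed (rule PD_mono[OF assms])

lemma PD_inj:
  assumes "prae_dilator T" "nat_mor n m f" "\<sigma> \<in> Tset T n" "\<tau> \<in> Tset T n"
    "Tmap T n m f \<sigma> = Tmap T n m f \<tau>"
  shows "\<sigma> = \<tau>"
proof (rule ccontr)
  have lm: "strict_linear_on (Tset T m) (Tless T m)" and ln: "strict_linear_on (Tset T n) (Tless T n)"
    using PD_lin[OF assms(1)] by blast+
  have im: "Tmap T n m f \<sigma> \<in> Tset T m" using PD_map[OF assms(1,2)] assms(3) by blast
  assume "\<sigma> \<noteq> \<tau>"
  then have "Tless T n \<sigma> \<tau> \<or> Tless T n \<tau> \<sigma>" using slo_total[OF ln assms(3,4)] by blast
  then show False using PD_mono[OF assms(1,2,3,4)] PD_mono[OF assms(1,2,4,3)] assms(5) slo_irrefl[OF lm im] by auto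
qed

section \<open>The order D\<close>

lemma nat_morD: "nat_mor n m f \<Longrightarrow> i < j \<Longrightarrow> j < n \<Longrightarrow> f i < f j"
  unfolding nat_mor_def strict_mono_on_def by simp
lemma nat_morR: "nat_mor n m f \<Longrightarrow> i < n \<Longrightarrow> f i < m"
  unfolding nat_mor_def by blast
lemma nat_morI: "(\<And>i j. i < j \<Longrightarrow> j < n \<Longrightarrow> f i < f j) \<Longrightarrow> (\<And>i. i < n \<Longrightarrow> f i < m) \<Longrightarrow> nat_mor n m f"
  unfolding nat_mor_def strict_mono_on_def by auto

lemma nat_mor_comp: "nat_mor n m f \<Longrightarrow> nat_mor m k g \<Longrightarrow> nat_mor n k (g \<circ> f)"
  by (rule nat_morI) (auto intro: nat_morD nat_morR)

lemma cinc_map: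
  assumes "prae_dilator T" "strict_linear_on X r" "b \<subseteq> X" "finite b" "a \<subseteq> b" "\<sigma> \<in> Tset T (card a)"
  shows "Tmap T (card a) (card b) (collapse_incl r a b) \<sigma> \<in> Tset T (card b)"
  using PD_map[OF assms(1) cinc_nat_mor[OF assms(2-5)] assms(6)] .

lemma cinc_lift:
  assumes "prae_dilator T" "strict_linear_on X r" "c \<subseteq> X" "finite c" "a \<subseteq> b" "b \<subseteq> c"
    "\<sigma> \<in> Tset T (card a)"
  shows "Tmap T (card b) (card c) (collapse_incl r b c) (Tmap T (card a) (card b) (collapse_incl r a b) \<sigma>)
       = Tmap T (card a) (card c) (collapse_incl r a c) \<sigma>"
proof -
  have fb: "finite b" "b \<subseteq> X" using finite_subset[OF assms(6,4)] assms(3,6) by auto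
  have m1: "nat_mor (card a) (card b) (collapse_incl r a b)" using cinc_nat_mor[OF assms(2) fb(2,1) assms(5)] .
  have m2: "nat_mor (card b) (card c) (collapse_incl r b c)" using cinc_nat_mor[OF assms(2,3,4,6)] .
  have ac: "a \<subseteq> c" using assms(5,6) by (rule subset_trans)
  have m3: "nat_mor (card a) (card c) (collapse_incl r a c)" using cinc_nat_mor[OF assms(2,3,4) ac] .
  have "Tmap T (card a) (card c) (collapse_incl r a c) \<sigma> = Tmap T (card a) (card c) (collapse_incl r b c \<circ> collapse_incl r a b) \<sigma>"
  proof (rule PD_cong[OF assms(1) m3 _ assms(7)])
    fix i assume "i < card a"
    then show "collapse_incl r a c i = (collapse_incl r b c \<circ> collapse_incl r a b) i"
      using cinc_comp[OF assms(2,3,4,5,6)] by simp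
  qed
  also have "\<dots> = Tmap T (card b) (card c) (collapse_incl r b c) (Tmap T (card a) (card b) (collapse_incl r a b) \<sigma>)"
    using PD_comp[OF assms(1) m1 m2 assms(7)] .
  finally show ?thesis by simp
qed

lemma DT_less_lift:
  assumes "prae_dilator T" "strict_linear_on X r" "c \<subseteq> X" "finite c" "a \<subseteq> c" "b \<subseteq> c"
    "\<sigma> \<in> Tset T (card a)" "\<tau> \<in> Tset T (card b)"
  shows "DT_less T r (a, \<sigma>) (b, \<tau>) \<longleftrightarrow>
    Tless T (card c) (Tmap T (card a) (card c) (collapse_incl r a c) \<sigma>) (Tmap T (card b) (card c) (collapse_incl r b c) \<tau>)"
proof -
  let ?ab = "a \<union> b"
  have abc: "?ab \<subseteq> c" using assms(5,6) by (rule Un_least)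
  have fab: "finite ?ab" "?ab \<subseteq> X" using finite_subset[OF abc assms(4)] abc assms(3) by auto
  have m: "nat_mor (card ?ab) (card c) (collapse_incl r ?ab c)" by (rule cinc_nat_mor[OF assms(2,3,4) abc])
  have s1: "Tmap T (card a) (card ?ab) (collapse_incl r a ?ab) \<sigma> \<in> Tset T (card ?ab)"
    by (rule cinc_map[OF assms(1,2) fab(2,1) Un_upper1 assms(7)])
  have s2: "Tmap T (card b) (card ?ab) (collapse_incl r b ?ab) \<tau> \<in> Tset T (card ?ab)"
    by (rule cinc_map[OF assms(1,2) fab(2,1) Un_upper2 assms(8)])
  have e1: "Tmap T (card ?ab) (card c) (collapse_incl r ?ab c) (Tmap T (card a) (card ?ab) (collapse_incl r a ?ab) \<sigma>)
     = Tmap T (card a) (card c) (collapse_incl r a c) \<sigma>"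
    by (rule cinc_lift[OF assms(1-4) Un_upper1 abc assms(7)])
  have e2: "Tmap T (card ?ab) (card c) (collapse_incl r ?ab c) (Tmap T (card b) (card ?ab) (collapse_incl r b ?ab) \<tau>)
     = Tmap T (card b) (card c) (collapse_incl r b c) \<tau>"
    by (rule cinc_lift[OF assms(1-4) Un_upper2 abc assms(8)])
  show ?thesis unfolding DT_less_def prod.case
    using PD_reflect[OF assms(1) m s1 s2] unfolding e1 e2 by (rule sym)
qed

lemma DT_irrefl:
  assumes "prae_dilator T" "strict_linear_on X r" "a \<subseteq> X" "finite a" "\<sigma> \<in> Tset T (card a)"
  shows "\<not> DT_less T r (a, \<sigma>) (a, \<sigma>)"
proof -
  have "Tmap T (card a) (card a) (collapse_incl r a a) \<sigma> \<in> Tset T (card a)"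
    by (rule cinc_map[OF assms(1-4) subset_refl assms(5)])
  then show ?thesis unfolding DT_less_lift[OF assms(1-4) subset_refl subset_refl assms(5,5)]
    by (rule slo_irrefl[OF PD_lin[OF assms(1)]])
qed

lemma DT_trans:
  assumes "prae_dilator T" "strict_linear_on X r" "a \<subseteq> X" "finite a" "b \<subseteq> X" "finite b" "c \<subseteq> X" "finite c"
    "\<sigma> \<in> Tset T (card a)" "\<tau> \<in> Tset T (card b)" "\<upsilon> \<in> Tset T (card c)"
    "DT_less T r (a, \<sigma>) (b, \<tau>)" "DT_less T r (b, \<tau>) (c, \<upsilon>)"
  shows "DT_less T r (a, \<sigma>) (c, \<upsilon>)"
proof -
  let ?U = "a \<union> b \<union> c"
  have U: "?U \<subseteq> X" "finite ?U" using assms(3-8) by auto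
  have sub: "a \<subseteq> ?U" "b \<subseteq> ?U" "c \<subseteq> ?U" by auto
  have i: "Tmap T (card a) (card ?U) (collapse_incl r a ?U) \<sigma> \<in> Tset T (card ?U)"
    "Tmap T (card b) (card ?U) (collapse_incl r b ?U) \<tau> \<in> Tset T (card ?U)"
    "Tmap T (card c) (card ?U) (collapse_incl r c ?U) \<upsilon> \<in> Tset T (card ?U)"
    by (rule cinc_map[OF assms(1,2) U sub(1) assms(9)], rule cinc_map[OF assms(1,2) U sub(2) assms(10)],
      rule cinc_map[OF assms(1,2) U sub(3) assms(11)])
  have l1: "Tless T (card ?U) (Tmap T (card a) (card ?U) (collapse_incl r a ?U) \<sigma>) (Tmap T (card b) (card ?U) (collapse_incl r b ?U) \<tau>)"
    using assms(12) unfolding DT_less_lift[OF assms(1,2) U sub(1,2) assms(9,10)] .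
  have l2: "Tless T (card ?U) (Tmap T (card b) (card ?U) (collapse_incl r b ?U) \<tau>) (Tmap T (card c) (card ?U) (collapse_incl r c ?U) \<upsilon>)"
    using assms(13) unfolding DT_less_lift[OF assms(1,2) U sub(2,3) assms(10,11)] .
  have "Tless T (card ?U) (Tmap T (card a) (card ?U) (collapse_incl r a ?U) \<sigma>) (Tmap T (card c) (card ?U) (collapse_incl r c ?U) \<upsilon>)"
    using slo_trans[OF PD_lin[OF assms(1)] i l1 l2] .
  then show ?thesis unfolding DT_less_lift[OF assms(1,2) U sub(1,3) assms(9,11)] .
qed

lemma DT_total:
  assumes "prae_dilator T" "strict_linear_on X r" "a \<subseteq> X" "finite a" "b \<subseteq> X" "finite b"
    "\<sigma> \<in> Tset T (card a)" "\<tau> \<in> Tset T (card b)"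
    "Tsupp T (card a) \<sigma> = {..<card a}" "Tsupp T (card b) \<tau> = {..<card b}"
  shows "DT_less T r (a, \<sigma>) (b, \<tau>) \<or> (a = b \<and> \<sigma> = \<tau>) \<or> DT_less T r (b, \<tau>) (a, \<sigma>)"
proof -
  let ?U = "a \<union> b"
  have U: "?U \<subseteq> X" "finite ?U" using assms(3-6) by auto
  let ?x = "Tmap T (card a) (card ?U) (collapse_incl r a ?U) \<sigma>"
  let ?y = "Tmap T (card b) (card ?U) (collapse_incl r b ?U) \<tau>"
  have i: "?x \<in> Tset T (card ?U)" "?y \<in> Tset T (card ?U)"
    by (rule cinc_map[OF assms(1,2) U Un_upper1 assms(7)], rule cinc_map[OF assms(1,2) U Un_upper2 assms(8)])
  have ma: "nat_mor (card a) (card ?U) (collapse_incl r a ?U)" by (rule cinc_nat_mor[OF assms(2) U Un_upper1])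
  have mb: "nat_mor (card b) (card ?U) (collapse_incl r b ?U)" by (rule cinc_nat_mor[OF assms(2) U Un_upper2])
  show ?thesis
  proof (cases "?x = ?y")
    case True
    have "Tsupp T (card ?U) ?x = collapse_incl r a ?U ` {..<card a}"
      using PD_supp[OF assms(1) ma assms(7)] assms(9) by simp
    also have "\<dots> = rank r ?U ` a" by (rule cinc_image[OF assms(2-4)])
    finally have 1: "Tsupp T (card ?U) ?x = rank r ?U ` a" .
    have "Tsupp T (card ?U) ?y = collapse_incl r b ?U ` {..<card b}"
      using PD_supp[OF assms(1) mb assms(8)] assms(10) by simp
    also have "\<dots> = rank r ?U ` b" by (rule cinc_image[OF assms(2,5,6)])
    finally have 2: "Tsupp T (card ?U) ?y = rank r ?U ` b" .
    have "rank r ?U ` a = rank r ?U ` b" using True 1 2 by simp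
    then have ab: "a = b" using inj_on_image_eq_iff[OF rank_inj[OF assms(2) U] Un_upper1 Un_upper2] by blast
    have "\<sigma> = \<tau>"
    proof (rule PD_inj[OF assms(1) ma assms(7)])
      show "\<tau> \<in> Tset T (card a)" using assms(8) ab by simp
      show "?x = Tmap T (card a) (card ?U) (collapse_incl r a ?U) \<tau>" using True ab by simp
    qed
    then show ?thesis using ab by simp
  next
    case False
    then have "Tless T (card ?U) ?x ?y \<or> Tless T (card ?U) ?y ?x"
      using slo_total[OF PD_lin[OF assms(1)] i] by blast
    moreover have "DT_less T r (a, \<sigma>) (b, \<tau>) \<longleftrightarrow> Tless T (card ?U) ?x ?y"
      by (rule DT_less_lift[OF assms(1,2) U Un_upper1 Un_upper2 assms(7,8)])
    moreover have "DT_less T r (b, \<tau>) (a, \<sigma>) \<longleftrightarrow> Tless T (card ?U) ?y ?x"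
      by (rule DT_less_lift[OF assms(1,2) U Un_upper2 Un_upper1 assms(8,7)])
    ultimately show ?thesis by blast
  qed
qed

lemma rank_unique:
  assumes "strict_linear_on X r" "U \<subseteq> X" "finite U"
    and hr: "\<And>x. x \<in> U \<Longrightarrow> h x < card U"
    and hm: "\<And>x y. x \<in> U \<Longrightarrow> y \<in> U \<Longrightarrow> r x y \<longleftrightarrow> h x < h y"
    and x: "x \<in> U"
  shows "h x = rank r U x"
proof -
  have inj: "inj_on h U"
  proof (rule inj_onI)
    fix y z assume yz: "y \<in> U" "z \<in> U" "h y = h z"
    show "y = z"
    proof (rule ccontr)
      assume "y \<noteq> z"
      then have "r y z \<or> r z y" using slo_total[OF assms(1)] yz assms(2) by blast
      then show False using hm[OF yz(1,2)] hm[OF yz(2,1)] yz(3) by auto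
    qed
  qed
  have img: "h ` U = {..<card U}"
  proof (rule card_subset_eq)
    show "h ` U \<subseteq> {..<card U}" using hr by auto
    show "card (h ` U) = card {..<card U}" using card_image[OF inj] by simp
  qed simp
  have "{y \<in> U. r y x} = {y \<in> U. h y < h x}" using hm x by blast
  then have "rank r U x = card {y \<in> U. h y < h x}" unfolding rank_def by simp
  also have "\<dots> = card (h ` {y \<in> U. h y < h x})"
    by (rule card_image[symmetric], rule inj_on_subset[OF inj]) auto
  also have "h ` {y \<in> U. h y < h x} = {..<h x}"
  proof
    show "h ` {y \<in> U. h y < h x} \<subseteq> {..<h x}" by auto
    show "{..<h x} \<subseteq> h ` {y \<in> U. h y < h x}"
    proof
      fix z assume z: "z \<in> {..<h x}"
      then have "z \<in> {..<card U}" using hr[OF x] by auto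
      then obtain y where "y \<in> U" "z = h y" using img by (metis imageE)
      then show "z \<in> h ` {y \<in> U. h y < h x}" using z by auto
    qed
  qed
  finally show ?thesis by simp
qed

lemma ex_iff_DT:
  assumes PD: "prae_dilator T" and slo: "strict_linear_on X r"
    and sX: "set ss \<subseteq> X" and tX: "set ts \<subseteq> X"
    and ss: "sorted_wrt r ss" and ts: "sorted_wrt r ts"
    and sig: "\<sigma> \<in> Tset T (length ss)" and tau: "\<tau> \<in> Tset T (length ts)"
  shows "(\<exists>f g. nat_mor (length ss) (card (set ss \<union> set ts)) f \<and>
             nat_mor (length ts) (card (set ss \<union> set ts)) g \<and>
             (\<forall>i<length ss. \<forall>j<length ts.
                (f i < g j \<longleftrightarrow> r (ss ! i) (ts ! j)) \<and>
                (g j < f i \<longleftrightarrow> r (ts ! j) (ss ! i))) \<and>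
             Tless T (card (set ss \<union> set ts))
               (Tmap T (length ss) (card (set ss \<union> set ts)) f \<sigma>)
               (Tmap T (length ts) (card (set ss \<union> set ts)) g \<tau>))
     \<longleftrightarrow> DT_less T r (set ss, \<sigma>) (set ts, \<tau>)" (is "?L \<longleftrightarrow> ?R")
proof -
  define U where "U = set ss \<union> set ts"
  have U: "U \<subseteq> X" "finite U" unfolding U_def using sX tX by auto
  have cs: "card (set ss) = length ss" by (rule sorted_card[OF slo sX ss])
  have ct: "card (set ts) = length ts" by (rule sorted_card[OF slo tX ts])
  have mf: "nat_mor (length ss) (card U) (collapse_incl r (set ss) U)"
    using cinc_nat_mor[OF slo U, of "set ss"] cs unfolding U_def by simp
  have mg: "nat_mor (length ts) (card U) (collapse_incl r (set ts) U)"
    using cinc_nat_mor[OF slo U, of "set ts"] ct unfolding U_def by simp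
  have cf: "\<And>i. i < length ss \<Longrightarrow> collapse_incl r (set ss) U i = rank r U (ss ! i)"
    by (rule cinc_sorted[OF slo sX ss])
  have cg: "\<And>j. j < length ts \<Longrightarrow> collapse_incl r (set ts) U j = rank r U (ts ! j)"
    by (rule cinc_sorted[OF slo tX ts])
  have R: "?R \<longleftrightarrow> Tless T (card U) (Tmap T (length ss) (card U) (collapse_incl r (set ss) U) \<sigma>)
             (Tmap T (length ts) (card U) (collapse_incl r (set ts) U) \<tau>)"
    unfolding DT_less_def prod.case U_def cs ct ..
  have sU: "\<And>i. i < length ss \<Longrightarrow> ss ! i \<in> U" unfolding U_def by simp
  have tU: "\<And>j. j < length ts \<Longrightarrow> ts ! j \<in> U" unfolding U_def by simp
  show ?thesis
  proof
    assume ?R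
    show ?L unfolding U_def[symmetric]
    proof (intro exI conjI allI impI)
      show "nat_mor (length ss) (card U) (collapse_incl r (set ss) U)" by (rule mf)
      show "nat_mor (length ts) (card U) (collapse_incl r (set ts) U)" by (rule mg)
      show "Tless T (card U) (Tmap T (length ss) (card U) (collapse_incl r (set ss) U) \<sigma>)
             (Tmap T (length ts) (card U) (collapse_incl r (set ts) U) \<tau>)" using \<open>?R\<close> R by blast
      fix i j assume i: "i < length ss" and j: "j < length ts"
      show "collapse_incl r (set ss) U i < collapse_incl r (set ts) U j \<longleftrightarrow> r (ss ! i) (ts ! j)"
        unfolding cf[OF i] cg[OF j] by (rule rank_less_iff[OF slo U sU[OF i] tU[OF j]])
      show "collapse_incl r (set ts) U j < collapse_incl r (set ss) U i \<longleftrightarrow> r (ts ! j) (ss ! i)"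
        unfolding cf[OF i] cg[OF j] by (rule rank_less_iff[OF slo U tU[OF j] sU[OF i]])
    qed
  next
    assume ?L
    then obtain f g where f: "nat_mor (length ss) (card U) f" and g: "nat_mor (length ts) (card U) g"
      and c: "\<And>i j. i < length ss \<Longrightarrow> j < length ts \<Longrightarrow>
                (f i < g j \<longleftrightarrow> r (ss ! i) (ts ! j)) \<and> (g j < f i \<longleftrightarrow> r (ts ! j) (ss ! i))"
      and lt: "Tless T (card U) (Tmap T (length ss) (card U) f \<sigma>) (Tmap T (length ts) (card U) g \<tau>)"
      unfolding U_def by blast
    define h where "h x = (if x \<in> set ss then f (rank r (set ss) x) else g (rank r (set ts) x))" for x
    have rs: "\<And>i. i < length ss \<Longrightarrow> rank r (set ss) (ss ! i) = i" by (rule sorted_rank[OF slo sX ss])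
    have rt: "\<And>j. j < length ts \<Longrightarrow> rank r (set ts) (ts ! j) = j" by (rule sorted_rank[OF slo tX ts])
    have hs: "\<And>i. i < length ss \<Longrightarrow> h (ss ! i) = f i" unfolding h_def using rs by simp
    have ht: "\<And>j. j < length ts \<Longrightarrow> h (ts ! j) = g j"
    proof -
      fix j assume j: "j < length ts"
      show "h (ts ! j) = g j"
      proof (cases "ts ! j \<in> set ss")
        case True
        then obtain i where i: "i < length ss" "ss ! i = ts ! j" by (auto simp: in_set_conv_nth)
        have "\<not> r (ts ! j) (ts ! j)" using slo_irrefl[OF slo] tX nth_mem[OF j] by blast
        then have "f i = g j" using c[OF i(1) j] i(2) by auto
        then show ?thesis using hs[OF i(1)] i(2) by simp
      next
        case False
        then show ?thesis unfolding h_def using rt[OF j] by simp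
      qed
    qed
    have Ucases: "\<And>x. x \<in> U \<Longrightarrow> (\<exists>i<length ss. x = ss ! i) \<or> (\<exists>j<length ts. x = ts ! j)"
      unfolding U_def by (auto simp: in_set_conv_nth)
    have hr: "\<And>x. x \<in> U \<Longrightarrow> h x < card U"
      using Ucases hs ht nat_morR[OF f] nat_morR[OF g] by metis
    have sless: "\<And>i i'. i < length ss \<Longrightarrow> i' < length ss \<Longrightarrow> r (ss ! i) (ss ! i') \<longleftrightarrow> i < i'"
      using en_less_iff[OF slo sX finite_set] sorted_en[OF slo sX ss] cs by metis
    have tless: "\<And>j j'. j < length ts \<Longrightarrow> j' < length ts \<Longrightarrow> r (ts ! j) (ts ! j') \<longleftrightarrow> j < j'"
      using en_less_iff[OF slo tX finite_set] sorted_en[OF slo tX ts] ct by metis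
    have fless: "\<And>i i'. i < length ss \<Longrightarrow> i' < length ss \<Longrightarrow> f i < f i' \<longleftrightarrow> i < i'"
      using nat_morD[OF f] by (metis less_asym' linorder_neqE_nat)
    have gless: "\<And>j j'. j < length ts \<Longrightarrow> j' < length ts \<Longrightarrow> g j < g j' \<longleftrightarrow> j < j'"
      using nat_morD[OF g] by (metis less_asym' linorder_neqE_nat)
    have hm: "\<And>x y. x \<in> U \<Longrightarrow> y \<in> U \<Longrightarrow> r x y \<longleftrightarrow> h x < h y"
    proof -
      fix x y assume x: "x \<in> U" and y: "y \<in> U"
      show "r x y \<longleftrightarrow> h x < h y"
        using Ucases[OF x] Ucases[OF y]
      proof (elim disjE exE conjE)
        fix i i' assume "i < length ss" "x = ss ! i" "i' < length ss" "y = ss ! i'"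
        then show ?thesis using hs sless fless by simp
      next
        fix i j assume "i < length ss" "x = ss ! i" "j < length ts" "y = ts ! j"
        then show ?thesis using hs ht c by simp
      next
        fix i j assume "j < length ts" "x = ts ! j" "i < length ss" "y = ss ! i"
        then show ?thesis using hs ht c by simp
      next
        fix j j' assume "j < length ts" "x = ts ! j" "j' < length ts" "y = ts ! j'"
        then show ?thesis using ht tless gless by simp
      qed
    qed
    have hrank: "\<And>x. x \<in> U \<Longrightarrow> h x = rank r U x" by (rule rank_unique[OF slo U hr hm])
    have fe: "\<And>i. i < length ss \<Longrightarrow> f i = collapse_incl r (set ss) U i"
      using hs hrank sU cf by metis
    have ge: "\<And>j. j < length ts \<Longrightarrow> g j = collapse_incl r (set ts) U j"
      using ht hrank tU cg by metis
    have "Tmap T (length ss) (card U) f \<sigma> = Tmap T (length ss) (card U) (collapse_incl r (set ss) U) \<sigma>"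
      by (rule PD_cong[OF PD f fe sig])
    moreover have "Tmap T (length ts) (card U) g \<tau> = Tmap T (length ts) (card U) (collapse_incl r (set ts) U) \<tau>"
      by (rule PD_cong[OF PD g ge tau])
    ultimately show ?R using R lt by simp
  qed
qed

declare thless.simps[simp del]

lemma size_comp: "x \<in> set ss \<Longrightarrow> size x < size (Th \<sigma> ss)"
  using size_mem_le[of x ss] by simp

lemma size_pos: "0 < size (x :: thterm)"
  by (cases x) simp

lemma thT_D:
  assumes "Th \<sigma> ss \<in> thT T"
  shows "set ss \<subseteq> thT T" "successively (thless T) ss" "\<sigma> \<in> Tset T (length ss)"
    "Tsupp T (length ss) \<sigma> = {..<length ss}"
  using assms by (cases rule: thT.cases, auto)+

lemma thless_eq:
  "thless T (Th \<sigma> ss) (Th \<tau> ts) \<longleftrightarrow>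
  ((\<exists>f g. nat_mor (length ss) (card (set ss \<union> set ts)) f \<and>
          nat_mor (length ts) (card (set ss \<union> set ts)) g \<and>
          (\<forall>i<length ss.
              \<forall>j<length ts.
                 (f i < g j \<longleftrightarrow> thless T (ss ! i) (ts ! j)) \<and>
                 (g j < f i \<longleftrightarrow> thless T (ts ! j) (ss ! i))) \<and>
          Tless T (card (set ss \<union> set ts))
           (Tmap T (length ss) (card (set ss \<union> set ts)) f \<sigma>)
           (Tmap T (length ts) (card (set ss \<union> set ts)) g \<tau>)) \<and>
   (ss \<noteq> [] \<longrightarrow> thless T (last ss) (Th \<tau> ts))) \<or>
   (ts \<noteq> [] \<and> (thless T (Th \<sigma> ss) (last ts) \<or> Th \<sigma> ss = last ts))"
  by (subst thless.simps) simp

lemma thless_last: "ts \<noteq> [] \<Longrightarrow> thless T s (last ts) \<or> s = last ts \<Longrightarrow> thless T s (Th \<tau> ts)"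
  by (cases s) (simp only: thless_eq, blast)

lemma sorted_last: "sorted_wrt r xs \<Longrightarrow> x \<in> set xs \<Longrightarrow> x = last xs \<or> r x (last xs)"
proof (induction xs)
  case (Cons y ys)
  show ?case
  proof (cases "ys = []")
    case True then show ?thesis using Cons by simp
  next
    case False
    then have "last ys \<in> set ys" by simp
    then show ?thesis using Cons False by auto
  qed
qed simp

definition S :: "praedil \<Rightarrow> nat \<Rightarrow> thterm set" where
  "S T N = {x \<in> thT T. size x \<le> N}"

lemma S_comps:
  assumes "Th \<sigma> ss \<in> S T (Suc N)"
  shows "set ss \<subseteq> S T N"
proof
  fix x assume x: "x \<in> set ss"
  have "x \<in> thT T" using thT_D(1)[of \<sigma> ss T] assms x unfolding S_def by blast
  moreover have "size x \<le> N" using size_comp[OF x, of \<sigma>] assms unfolding S_def by simp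
  ultimately show "x \<in> S T N" unfolding S_def by simp
qed

lemma S_mono: "N \<le> M \<Longrightarrow> S T N \<subseteq> S T M"
  unfolding S_def by auto

lemma S_sorted:
  assumes lin: "strict_linear_on (S T N) (thless T)" and s: "Th \<sigma> ss \<in> S T (Suc N)"
  shows "sorted_wrt (thless T) ss"
proof -
  have sub: "set ss \<subseteq> S T N" by (rule S_comps[OF s])
  have "successively (thless T) ss" using thT_D(2)[of \<sigma> ss T] s unfolding S_def by blast
  moreover have "successively (thless T) ss = sorted_wrt (thless T) ss"
    by (rule successively_iff_sorted_wrt_strong) (use slo_trans[OF lin] sub in blast)
  ultimately show ?thesis by simp
qed

context
  fixes T :: praedil and N :: nat
  assumes PD: "prae_dilator T" and lin: "strict_linear_on (S T N) (thless T)"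
begin

lemma char:
  assumes s: "Th \<sigma> ss \<in> S T (Suc N)" and t: "Th \<tau> ts \<in> S T (Suc N)"
  shows "thless T (Th \<sigma> ss) (Th \<tau> ts) \<longleftrightarrow>
    (DT_less T (thless T) (set ss, \<sigma>) (set ts, \<tau>) \<and> (ss \<noteq> [] \<longrightarrow> thless T (last ss) (Th \<tau> ts))) \<or>
    (ts \<noteq> [] \<and> (thless T (Th \<sigma> ss) (last ts) \<or> Th \<sigma> ss = last ts))"
proof -
  have "\<sigma> \<in> Tset T (length ss)" using thT_D(3) s unfolding S_def by blast
  moreover have "\<tau> \<in> Tset T (length ts)" using thT_D(3) t unfolding S_def by blast
  ultimately show ?thesis unfolding thless_eq
    using ex_iff_DT[OF PD lin S_comps[OF s] S_comps[OF t] S_sorted[OF lin s] S_sorted[OF lin t]]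
    by simp
qed

lemma DTmem:
  assumes s: "Th \<sigma> ss \<in> S T (Suc N)"
  shows "set ss \<subseteq> S T N" "finite (set ss)" "\<sigma> \<in> Tset T (card (set ss))"
    "Tsupp T (card (set ss)) \<sigma> = {..<card (set ss)}"
proof -
  have c: "card (set ss) = length ss" by (rule sorted_card[OF lin S_comps[OF s] S_sorted[OF lin s]])
  show "set ss \<subseteq> S T N" by (rule S_comps[OF s])
  show "finite (set ss)" by simp
  show "\<sigma> \<in> Tset T (card (set ss))" using thT_D(3) s c unfolding S_def by auto
  show "Tsupp T (card (set ss)) \<sigma> = {..<card (set ss)}" using thT_D(4) s c unfolding S_def by auto
qed

lemma disjE2: "P \<or> Q \<Longrightarrow> (Q \<Longrightarrow> R) \<Longrightarrow> (P \<Longrightarrow> R) \<Longrightarrow> R" by blast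

lemma step_trans:
  "s \<in> S T (Suc N) \<Longrightarrow> t \<in> S T (Suc N) \<Longrightarrow> u \<in> S T (Suc N) \<Longrightarrow>
   thless T s t \<Longrightarrow> thless T t u \<Longrightarrow> thless T s u"
proof (induction "size s + size t + size u" arbitrary: s t u rule: less_induct)
  case less
  obtain \<sigma> ss where s: "s = Th \<sigma> ss" by (cases s)
  obtain \<tau> ts where t: "t = Th \<tau> ts" by (cases t)
  obtain \<upsilon> us where u: "u = Th \<upsilon> us" by (cases u)
  note ms = less.prems(1)[unfolded s] and mt = less.prems(2)[unfolded t] and mu = less.prems(3)[unfolded u]
  have cst: "thless T s t \<longleftrightarrow> (DT_less T (thless T) (set ss, \<sigma>) (set ts, \<tau>) \<and> (ss \<noteq> [] \<longrightarrow> thless T (last ss) t)) \<or>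
    (ts \<noteq> [] \<and> (thless T s (last ts) \<or> s = last ts))" unfolding s t by (rule char[OF ms mt])
  have ctu: "thless T t u \<longleftrightarrow> (DT_less T (thless T) (set ts, \<tau>) (set us, \<upsilon>) \<and> (ts \<noteq> [] \<longrightarrow> thless T (last ts) u)) \<or>
    (us \<noteq> [] \<and> (thless T t (last us) \<or> t = last us))" unfolding t u by (rule char[OF mt mu])
  have csu: "thless T s u \<longleftrightarrow> (DT_less T (thless T) (set ss, \<sigma>) (set us, \<upsilon>) \<and> (ss \<noteq> [] \<longrightarrow> thless T (last ss) u)) \<or>
    (us \<noteq> [] \<and> (thless T s (last us) \<or> s = last us))" unfolding s u by (rule char[OF ms mu])
  have SN: "S T N \<subseteq> S T (Suc N)" by (rule S_mono) simp
  from less.prems(5)[unfolded ctu] show ?case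
  proof (rule disjE2)
    assume "us \<noteq> [] \<and> (thless T t (last us) \<or> t = last us)"
    then have ne: "us \<noteq> []" and h: "thless T t (last us) \<or> t = last us" by blast+
    have y: "last us \<in> S T (Suc N)" using S_comps[OF mu] last_in_set[OF ne] SN by blast
    have sy: "size (last us) < size u" unfolding u using ne by (intro size_comp) simp
    have "thless T s (last us)"
      using h less.hyps[of s t "last us"] less.prems(1,2,4) y sy by auto
    then show ?thesis using csu ne by blast
  next
    assume "DT_less T (thless T) (set ts, \<tau>) (set us, \<upsilon>) \<and> (ts \<noteq> [] \<longrightarrow> thless T (last ts) u)"
    then have dtu: "DT_less T (thless T) (set ts, \<tau>) (set us, \<upsilon>)" and lt: "ts \<noteq> [] \<longrightarrow> thless T (last ts) u" by blast+
    from less.prems(4)[unfolded cst] show ?thesis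
    proof (rule disjE2)
      assume "ts \<noteq> [] \<and> (thless T s (last ts) \<or> s = last ts)"
      then have ne: "ts \<noteq> []" and h: "thless T s (last ts) \<or> s = last ts" by blast+
      have x: "last ts \<in> S T (Suc N)" using S_comps[OF mt] last_in_set[OF ne] SN by blast
      have sx: "size (last ts) < size t" unfolding t using ne by (intro size_comp) simp
      show ?thesis using h lt ne less.hyps[of s "last ts" u] less.prems(1,3) x sx by auto
    next
      assume "DT_less T (thless T) (set ss, \<sigma>) (set ts, \<tau>) \<and> (ss \<noteq> [] \<longrightarrow> thless T (last ss) t)"
      then have dst: "DT_less T (thless T) (set ss, \<sigma>) (set ts, \<tau>)" and ls: "ss \<noteq> [] \<longrightarrow> thless T (last ss) t" by blast+
      have dsu: "DT_less T (thless T) (set ss, \<sigma>) (set us, \<upsilon>)"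
        using DT_trans[OF PD lin DTmem(1,2)[OF ms] DTmem(1,2)[OF mt] DTmem(1,2)[OF mu]
            DTmem(3)[OF ms] DTmem(3)[OF mt] DTmem(3)[OF mu] dst dtu] .
      have "ss \<noteq> [] \<longrightarrow> thless T (last ss) u"
      proof
        assume ne: "ss \<noteq> []"
        have x: "last ss \<in> S T (Suc N)" using S_comps[OF ms] last_in_set[OF ne] SN by blast
        have sx: "size (last ss) < size s" unfolding s using ne by (intro size_comp) simp
        show "thless T (last ss) u" using ls ne less.hyps[of "last ss" t u] less.prems(2,3,5) x sx by auto
      qed
      then show ?thesis using csu dsu by blast
    qed
  qed
qed

lemma K:
  assumes ms: "Th \<sigma> ss \<in> S T (Suc N)" and ne: "ss \<noteq> []"
  shows "w \<in> S T N \<Longrightarrow> thless T w (last ss) \<or> w = last ss \<Longrightarrow> \<not> thless T (Th \<sigma> ss) w"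
proof (induction "size w" arbitrary: w rule: less_induct)
  case less
  obtain \<rho> ws where w: "w = Th \<rho> ws" by (cases w)
  have lS: "last ss \<in> S T N" using S_comps[OF ms] last_in_set[OF ne] by blast
  show ?case
  proof
    assume "thless T (Th \<sigma> ss) w"
    then have "(\<exists>f g. True) \<and> (ss \<noteq> [] \<longrightarrow> thless T (last ss) w) \<or>
      (ws \<noteq> [] \<and> (thless T (Th \<sigma> ss) (last ws) \<or> Th \<sigma> ss = last ws))"
      unfolding w thless_eq by blast
    then show False
    proof (rule disjE)
      assume "(\<exists>f g. True) \<and> (ss \<noteq> [] \<longrightarrow> thless T (last ss) w)"
      then have "thless T (last ss) w" using ne by blast
      then show False using less.prems(2) slo_irrefl[OF lin lS] slo_asym[OF lin lS less.prems(1)] by blast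
    next
      assume "ws \<noteq> [] \<and> (thless T (Th \<sigma> ss) (last ws) \<or> Th \<sigma> ss = last ws)"
      then have wne: "ws \<noteq> []" and h: "thless T (Th \<sigma> ss) (last ws) \<or> Th \<sigma> ss = last ws" by blast+
      let ?v = "last ws"
      have vS: "?v \<in> S T N"
      proof -
        have "w \<in> S T (Suc N)" using less.prems(1) S_mono[of N "Suc N" T] by auto
        then have "?v \<in> S T N" using S_comps[of \<rho> ws T N] w last_in_set[OF wne] by blast
        then show ?thesis .
      qed
      have vw: "thless T ?v w" unfolding w by (rule thless_last[OF wne]) simp
      have vl: "thless T ?v (last ss)"
        using less.prems(2) vw slo_trans[OF lin vS less.prems(1) lS] by blast
      show False using h
      proof
        assume "Th \<sigma> ss = ?v"
        then have sS: "Th \<sigma> ss \<in> S T N" using vS by simp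
        have "thless T (last ss) (Th \<sigma> ss)" by (rule thless_last[OF ne]) simp
        moreover have "thless T (Th \<sigma> ss) (last ss)"
          using \<open>thless T (Th \<sigma> ss) w\<close> less.prems(2) slo_trans[OF lin sS less.prems(1) lS] by blast
        ultimately show False using slo_asym[OF lin sS lS] by blast
      next
        assume "thless T (Th \<sigma> ss) ?v"
        moreover have "size ?v < size w" unfolding w using wne by (intro size_comp) simp
        ultimately show False using less.hyps[of ?v] vS vl by blast
      qed
    qed
  qed
qed

lemma step_irrefl:
  assumes m: "s \<in> S T (Suc N)"
  shows "\<not> thless T s s"
proof
  assume a: "thless T s s"
  obtain \<sigma> ss where s: "s = Th \<sigma> ss" by (cases s)
  note ms = m[unfolded s]
  from a[unfolded s char[OF ms ms]] show False
  proof (rule disjE)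
    assume "DT_less T (thless T) (set ss, \<sigma>) (set ss, \<sigma>) \<and> (ss \<noteq> [] \<longrightarrow> thless T (last ss) (Th \<sigma> ss))"
    then show False using DT_irrefl[OF PD lin DTmem(1,2,3)[OF ms]] by blast
  next
    assume "ss \<noteq> [] \<and> (thless T (Th \<sigma> ss) (last ss) \<or> Th \<sigma> ss = last ss)"
    then have ne: "ss \<noteq> []" and h: "thless T (Th \<sigma> ss) (last ss) \<or> Th \<sigma> ss = last ss" by blast+
    have sz: "size (last ss) < size (Th \<sigma> ss)" using ne by (intro size_comp) simp
    have "Th \<sigma> ss \<noteq> last ss" using sz by (metis less_irrefl)
    moreover have "last ss \<in> S T N" using S_comps[OF ms] last_in_set[OF ne] by blast
    ultimately show False using h K[OF ms ne, of "last ss"] by blast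
  qed
qed

lemma step_total:
  "s \<in> S T (Suc N) \<Longrightarrow> t \<in> S T (Suc N) \<Longrightarrow> thless T s t \<or> s = t \<or> thless T t s"
proof (induction "size s + size t" arbitrary: s t rule: less_induct)
  case less
  obtain \<sigma> ss where s: "s = Th \<sigma> ss" by (cases s)
  obtain \<tau> ts where t: "t = Th \<tau> ts" by (cases t)
  note ms = less.prems(1)[unfolded s] and mt = less.prems(2)[unfolded t]
  have cst: "thless T s t \<longleftrightarrow> (DT_less T (thless T) (set ss, \<sigma>) (set ts, \<tau>) \<and> (ss \<noteq> [] \<longrightarrow> thless T (last ss) t)) \<or>
    (ts \<noteq> [] \<and> (thless T s (last ts) \<or> s = last ts))" unfolding s t by (rule char[OF ms mt])
  have cts: "thless T t s \<longleftrightarrow> (DT_less T (thless T) (set ts, \<tau>) (set ss, \<sigma>) \<and> (ts \<noteq> [] \<longrightarrow> thless T (last ts) s)) \<or>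
    (ss \<noteq> [] \<and> (thless T t (last ss) \<or> t = last ss))" unfolding s t by (rule char[OF mt ms])
  have SN: "S T N \<subseteq> S T (Suc N)" by (rule S_mono) simp
  from DT_total[OF PD lin DTmem(1,2)[OF ms] DTmem(1,2)[OF mt] DTmem(3)[OF ms] DTmem(3)[OF mt]
      DTmem(4)[OF ms] DTmem(4)[OF mt]]
  show ?case
  proof (elim disjE conjE)
    assume "set ss = set ts" and "\<sigma> = \<tau>"
    moreover have "ts = ss"
      by (rule sorted_unique[OF lin S_comps[OF ms] S_sorted[OF lin ms] S_sorted[OF lin mt]]) (use \<open>set ss = set ts\<close> in simp)
    ultimately show ?thesis using s t by simp
  next
    assume d: "DT_less T (thless T) (set ss, \<sigma>) (set ts, \<tau>)"
    show ?thesis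
    proof (cases "ss \<noteq> [] \<longrightarrow> thless T (last ss) t")
      case True then show ?thesis using cst d by blast
    next
      case False
      then have ne: "ss \<noteq> []" and nl: "\<not> thless T (last ss) t" by auto
      have x: "last ss \<in> S T (Suc N)" using S_comps[OF ms] last_in_set[OF ne] SN by blast
      have sx: "size (last ss) < size s" unfolding s using ne by (intro size_comp) simp
      have "thless T t (last ss) \<or> t = last ss"
        using less.hyps[of "last ss" t] x less.prems(2) sx nl by auto
      then show ?thesis using cts ne by blast
    qed
  next
    assume d: "DT_less T (thless T) (set ts, \<tau>) (set ss, \<sigma>)"
    show ?thesis
    proof (cases "ts \<noteq> [] \<longrightarrow> thless T (last ts) s")
      case True then show ?thesis using cts d by blast
    next
      case False
      then have ne: "ts \<noteq> []" and nl: "\<not> thless T (last ts) s" by auto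
      have x: "last ts \<in> S T (Suc N)" using S_comps[OF mt] last_in_set[OF ne] SN by blast
      have sx: "size (last ts) < size t" unfolding t using ne by (intro size_comp) simp
      have "thless T s (last ts) \<or> s = last ts"
        using less.hyps[of s "last ts"] x less.prems(1) sx nl by auto
      then show ?thesis using cst ne by blast
    qed
  qed
qed

lemma step: "strict_linear_on (S T (Suc N)) (thless T)"
  unfolding strict_linear_on_def using step_irrefl step_trans step_total by blast

end

lemma S_lin:
  assumes PD: "prae_dilator T"
  shows "strict_linear_on (S T N) (thless T)"
proof (induction N)
  case 0
  have "S T 0 = {}" unfolding S_def using size_pos by (auto simp: not_less)
  then show ?case unfolding strict_linear_on_def by simp
next
  case (Suc N)
  then show ?case by (rule step[OF PD])
qed

lemma thT_lin:
  assumes PD: "prae_dilator T"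
  shows "strict_linear_on (thT T) (thless T)"
  unfolding strict_linear_on_def
proof (intro conjI ballI impI)
  fix x assume x: "x \<in> thT T"
  have "x \<in> S T (size x)" unfolding S_def using x by simp
  then show "\<not> thless T x x" using slo_irrefl[OF S_lin[OF PD]] by blast
next
  fix x y z assume x: "x \<in> thT T" and y: "y \<in> thT T" and z: "z \<in> thT T"
    and xy: "thless T x y" and yz: "thless T y z"
  let ?N = "size x + size y + size z"
  have "x \<in> S T ?N" "y \<in> S T ?N" "z \<in> S T ?N" unfolding S_def using x y z by auto
  then show "thless T x z" using slo_trans[OF S_lin[OF PD]] xy yz by blast
next
  fix x y assume x: "x \<in> thT T" and y: "y \<in> thT T" and xy: "x \<noteq> y"
  let ?N = "size x + size y"
  have "x \<in> S T ?N" "y \<in> S T ?N" unfolding S_def using x y by auto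
  then show "thless T x y \<or> thless T y x" using slo_total[OF S_lin[OF PD]] xy by blast
qed

definition theta :: "praedil \<Rightarrow> thterm set \<times> nat \<Rightarrow> thterm" where
  "theta T p = Th (snd p) (slist (thless T) (fst p))"

lemma theta_in:
  assumes PD: "prae_dilator T" and p: "(a, \<sigma>) \<in> DT T (thT T) (thless T)"
  shows "theta T (a, \<sigma>) \<in> thT T"
proof -
  have lin: "strict_linear_on (thT T) (thless T)" by (rule thT_lin[OF PD])
  have a: "finite a" "a \<subseteq> thT T" "\<sigma> \<in> Tset T (card a)" "Tsupp T (card a) \<sigma> = {..<card a}"
    using p unfolding DT_def by auto
  note sl = slist_props[OF lin a(2,1)]
  show ?thesis unfolding theta_def fst_conv snd_conv
  proof (rule thT_intro)
    show "\<forall>s\<in>set (slist (thless T) a). s \<in> thT T" using sl(1) a(2) by auto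
    show "successively (thless T) (slist (thless T) a)" using sl(2) by (rule successively_if_sorted_wrt)
    show "\<sigma> \<in> Tset T (length (slist (thless T) a))" using sl(3) a(3) by simp
    show "Tsupp T (length (slist (thless T) a)) \<sigma> = {..<length (slist (thless T) a)}" using sl(3) a(4) by simp
  qed
qed

theorem theorem4p3:
  assumes "prae_dilator T"
  shows "bh_fixed_point T (thT T) (thless T)"
proof -
  note PD = assms
  have lin: "strict_linear_on (thT T) (thless T)" by (rule thT_lin[OF PD])
  have "bh_collapse T (thT T) (thless T) (theta T)"
    unfolding bh_collapse_def
  proof (intro conjI ballI impI)
    fix \<rho> assume "\<rho> \<in> DT T (thT T) (thless T)"
    then show "theta T \<rho> \<in> thT T" using theta_in[OF PD] by (cases \<rho>) auto
  next
    fix \<rho> assume r: "\<rho> \<in> DT T (thT T) (thless T)"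
    obtain a \<sigma> where rr: "\<rho> = (a, \<sigma>)" by (cases \<rho>)
    have a: "finite a" "a \<subseteq> thT T" using r rr unfolding DT_def by auto
    note sl = slist_props[OF lin a(2,1)]
    show "fin_less (thless T) (DT_supp \<rho>) (theta T \<rho>)" unfolding fin_less_def DT_supp_def rr fst_conv
    proof
      fix x assume x: "x \<in> a"
      then have ne: "slist (thless T) a \<noteq> []" using sl(1) by auto
      have "x = last (slist (thless T) a) \<or> thless T x (last (slist (thless T) a))"
        using sorted_last[OF sl(2)] x sl(1) by blast
      then show "thless T x (theta T (a, \<sigma>))" unfolding theta_def fst_conv snd_conv
        using thless_last[OF ne] by blast
    qed
  next
    fix \<rho> \<pi> assume r: "\<rho> \<in> DT T (thT T) (thless T)" and p: "\<pi> \<in> DT T (thT T) (thless T)"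
      and d: "DT_less T (thless T) \<rho> \<pi>" and f: "fin_less (thless T) (DT_supp \<rho>) (theta T \<pi>)"
    obtain a \<sigma> where rr: "\<rho> = (a, \<sigma>)" by (cases \<rho>)
    obtain b \<tau> where pp: "\<pi> = (b, \<tau>)" by (cases \<pi>)
    have a: "finite a" "a \<subseteq> thT T" "\<sigma> \<in> Tset T (card a)" using r rr unfolding DT_def by auto
    have b: "finite b" "b \<subseteq> thT T" "\<tau> \<in> Tset T (card b)" using p pp unfolding DT_def by auto
    note sa = slist_props[OF lin a(2,1)] and sb = slist_props[OF lin b(2,1)]
    let ?ss = "slist (thless T) a" and ?ts = "slist (thless T) b"
    have ex: "\<exists>f g. nat_mor (length ?ss) (card (set ?ss \<union> set ?ts)) f \<and>
             nat_mor (length ?ts) (card (set ?ss \<union> set ?ts)) g \<and>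
             (\<forall>i<length ?ss. \<forall>j<length ?ts.
                (f i < g j \<longleftrightarrow> thless T (?ss ! i) (?ts ! j)) \<and>
                (g j < f i \<longleftrightarrow> thless T (?ts ! j) (?ss ! i))) \<and>
             Tless T (card (set ?ss \<union> set ?ts))
               (Tmap T (length ?ss) (card (set ?ss \<union> set ?ts)) f \<sigma>)
               (Tmap T (length ?ts) (card (set ?ss \<union> set ?ts)) g \<tau>)"
    proof (subst ex_iff_DT[OF PD lin])
      show "set ?ss \<subseteq> thT T" "set ?ts \<subseteq> thT T" using sa(1) sb(1) a(2) b(2) by auto
      show "sorted_wrt (thless T) ?ss" "sorted_wrt (thless T) ?ts" by (rule sa(2), rule sb(2))
      show "\<sigma> \<in> Tset T (length ?ss)" "\<tau> \<in> Tset T (length ?ts)" using sa(3) sb(3) a(3) b(3) by auto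
      show "DT_less T (thless T) (set ?ss, \<sigma>) (set ?ts, \<tau>)" using d rr pp sa(1) sb(1) by simp
    qed
    have l: "?ss \<noteq> [] \<longrightarrow> thless T (last ?ss) (Th \<tau> ?ts)"
    proof
      assume ne: "?ss \<noteq> []"
      have "last ?ss \<in> a" using last_in_set[OF ne] sa(1) by simp
      then show "thless T (last ?ss) (Th \<tau> ?ts)" using f unfolding fin_less_def DT_supp_def rr pp theta_def by simp
    qed
    show "thless T (theta T \<rho>) (theta T \<pi>)" unfolding rr pp theta_def fst_conv snd_conv thless_eq
      using ex l by blast
  qed
  then show ?thesis unfolding bh_fixed_point_def using lin by blast
qed

end
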